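(* For every integer $k\ge 2$ there exists a $k$-januarial of simple type with $h=1$, i.e. whose common graph $\Upsilon$ is a single simple circuit.
   Context: Let $\Delta(2,k,\ell)=\langle x,y:x^2=y^k=(xy)^\ell=1\rangle$, acting on a finite set $S$. The coset graph has: - vertex set $S$; - an undirected $x$-edge joining each pair of points transposed by $x$; - a directed $y$-edge $u\to uy$. It is $2$-cell embedded in a closed orientable surface via the rotation system (incoming $y$-edge, outgoing $y$-edge, $x$-edge) at each vertex. The faces are $y$-faces and $xy$-faces; this is the coset diagram. A $k$-januarial is the coset diagram of an action of $\Delta(2,k,\ell)$, for some $\ell$, in which $\langle xy\rangle$ has exactly two orbits, each of size $|S|/2$. Let $S_1,S_2$ be the closures of its two $xy$-faces. Collapsing each $y$-face to a point gives the companion diagram, with images $S_i'$ of $S_i$. The common graph is $\Upsilon=S_1'\cap S_2'$. The januarial is of simple type if $\Upsilon$ is a union of $h$ pairwise disjoint simple circuits. *)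

theory Defs
  imports Main
begin

text \<open>Points of S are naturals. Right actions: u.x = x u, u.(xy) = y (x u).\<close>

definition orb :: "(nat \<Rightarrow> nat) \<Rightarrow> nat \<Rightarrow> nat set" where
  "orb f u = {(f ^^ n) u | n. True}"

definition triangle_action :: "nat \<Rightarrow> nat \<Rightarrow> nat set \<Rightarrow> (nat \<Rightarrow> nat) \<Rightarrow> (nat \<Rightarrow> nat) \<Rightarrow> bool" where
  "triangle_action k l S x y \<longleftrightarrow>
     finite S \<and> bij_betw x S S \<and> bij_betw y S S \<and>
     (\<forall>u\<in>S. x (x u) = u) \<and> (\<forall>u\<in>S. (y ^^ k) u = u) \<and> (\<forall>u\<in>S. ((y \<circ> x) ^^ l) u = u)"

definition transitive_action :: "nat set \<Rightarrow> (nat \<Rightarrow> nat) \<Rightarrow> (nat \<Rightarrow> nat) \<Rightarrow> bool" where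
  "transitive_action S x y \<longleftrightarrow> S \<noteq> {} \<and>
     (\<forall>u\<in>S. \<forall>v\<in>S. (u, v) \<in> ({(w, x w) | w. w \<in> S} \<union> {(w, y w) | w. w \<in> S})\<^sup>*)"

definition xy_orbits :: "nat set \<Rightarrow> (nat \<Rightarrow> nat) \<Rightarrow> (nat \<Rightarrow> nat) \<Rightarrow> nat set set" where
  "xy_orbits S x y = {orb (y \<circ> x) u | u. u \<in> S}"

definition januarial :: "nat \<Rightarrow> nat set \<Rightarrow> (nat \<Rightarrow> nat) \<Rightarrow> (nat \<Rightarrow> nat) \<Rightarrow> bool" where
  "januarial k S x y \<longleftrightarrow>
     (\<exists>l>0. triangle_action k l S x y) \<and> transitive_action S x y \<and>
     card (xy_orbits S x y) = 2 \<and>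
     (\<forall>Q\<in>xy_orbits S x y. 2 * card Q = card S)"

text \<open>Companion diagram: vertices are the y-orbits (collapsed y-faces); edges are the x-edges
  {u, u.x}; the ends of an x-edge are the y-orbits of its points.
  The closure of the xy-face of the xy-orbit O contains the points of O and O.x and the
  x-edges {v, v.x} with v in O; its image in the companion diagram has vertex set
  {orb y v | v in O} and edge set {{v, x v} | v in O}.\<close>
definition face_vertices :: "(nat \<Rightarrow> nat) \<Rightarrow> nat set \<Rightarrow> nat set set" where
  "face_vertices y Q = {orb y v | v. v \<in> Q}"

definition face_edges :: "(nat \<Rightarrow> nat) \<Rightarrow> nat set \<Rightarrow> nat set set" where
  "face_edges x Q = {{v, x v} | v. v \<in> Q}"

definition edge_ends :: "(nat \<Rightarrow> nat) \<Rightarrow> nat set \<Rightarrow> nat set set" where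
  "edge_ends y e = {orb y w | w. w \<in> e}"

definition simple_circuit :: "'v set \<Rightarrow> 'e set \<Rightarrow> ('e \<Rightarrow> 'v set) \<Rightarrow> bool" where
  "simple_circuit V E ends \<longleftrightarrow>
     (\<exists>n::nat. \<exists>vs es. n \<ge> 1 \<and> inj_on vs {..<n} \<and> inj_on es {..<n} \<and>
        V = vs ` {..<n} \<and> E = es ` {..<n} \<and>
        (\<forall>i<n. ends (es i) = {vs i, vs (Suc i mod n)}))"

definition common_vertices :: "(nat \<Rightarrow> nat) \<Rightarrow> nat set \<Rightarrow> nat set \<Rightarrow> nat set set" where
  "common_vertices y O1 O2 = face_vertices y O1 \<inter> face_vertices y O2"

definition common_edges :: "(nat \<Rightarrow> nat) \<Rightarrow> nat set \<Rightarrow> nat set \<Rightarrow> nat set set" where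
  "common_edges x O1 O2 = face_edges x O1 \<inter> face_edges x O2"

definition januarial_simple_h1 :: "nat \<Rightarrow> nat set \<Rightarrow> (nat \<Rightarrow> nat) \<Rightarrow> (nat \<Rightarrow> nat) \<Rightarrow> bool" where
  "januarial_simple_h1 k S x y \<longleftrightarrow> januarial k S x y \<and>
     (\<exists>O1 O2. O1 \<in> xy_orbits S x y \<and> O2 \<in> xy_orbits S x y \<and> O1 \<noteq> O2 \<and>
        simple_circuit (common_vertices y O1 O2) (common_edges x O1 O2) (edge_ends y))"

end

theory Submission
  imports Defs
begin

lemma cyc_iter:
  assumes "m > 0" "\<forall>j<m. f (\<phi> j) = \<phi> (Suc j mod m)" "j < m"
  shows "(f ^^ n) (\<phi> j) = \<phi> ((j + n) mod m)"
proof (induction n)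
  case 0 then show ?case using assms by simp
next
  case (Suc n)
  have "(f ^^ Suc n) (\<phi> j) = f (\<phi> ((j + n) mod m))" using Suc by simp
  also have "\<dots> = \<phi> (Suc ((j + n) mod m) mod m)" using assms by simp
  also have "\<dots> = \<phi> ((j + Suc n) mod m)" by (simp add: mod_Suc_eq)
  finally show ?case .
qed

lemma cyc_orb:
  assumes "m > 0" "\<forall>j<m. f (\<phi> j) = \<phi> (Suc j mod m)" "j < m"
  shows "orb f (\<phi> j) = \<phi> ` {..<m}"
proof
  show "orb f (\<phi> j) \<subseteq> \<phi> ` {..<m}"
    unfolding orb_def using cyc_iter[OF assms] assms(1) by auto
  show "\<phi> ` {..<m} \<subseteq> orb f (\<phi> j)"
  proof
    fix u assume "u \<in> \<phi> ` {..<m}"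
    then obtain i where i: "i < m" "u = \<phi> i" by auto
    have "(f ^^ (i + m - j)) (\<phi> j) = \<phi> ((j + (i + m - j)) mod m)"
      using cyc_iter[OF assms] by blast
    also have "(j + (i + m - j)) mod m = i" using i assms by simp
    finally have "\<phi> i = (f ^^ (i + m - j)) (\<phi> j)" by simp
    then show "u \<in> orb f (\<phi> j)" unfolding orb_def using i by blast
  qed
qed

lemma cyc_id:
  assumes "m > 0" "\<forall>j<m. f (\<phi> j) = \<phi> (Suc j mod m)" "j < m"
  shows "(f ^^ m) (\<phi> j) = \<phi> j"
  using cyc_iter[OF assms, of m] assms by simp

lemma pow_in:
  assumes "\<forall>u\<in>S. f u \<in> S" "u \<in> S" shows "(f ^^ n) u \<in> S"
  using assms by (induction n) auto

lemma bij_from_pow: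
  assumes "\<forall>u\<in>S. f u \<in> S" "\<forall>u\<in>S. (f^^m) u = u" "m > 0"
  shows "bij_betw f S S"
proof -
  have m: "m = Suc (m - 1)" using assms by simp
  have inj: "inj_on f S"
  proof
    fix u v assume uv: "u \<in> S" "v \<in> S" "f u = f v"
    have "(f ^^ m) u = (f ^^ (m - 1)) (f u)" by (subst m) (simp only: funpow_Suc_right o_def)
    moreover have "(f ^^ m) v = (f ^^ (m - 1)) (f v)" by (subst m) (simp only: funpow_Suc_right o_def)
    ultimately show "u = v" using uv assms(2) by metis
  qed
  have "S \<subseteq> f ` S"
  proof
    fix u assume u: "u \<in> S"
    have "u = (f ^^ m) u" using u assms by simp
    also have "\<dots> = f ((f ^^ (m - 1)) u)" by (subst m) simp
    finally show "u \<in> f ` S" using pow_in[OF assms(1) u] by blast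
  qed
  then show ?thesis using inj assms(1) unfolding bij_betw_def by blast
qed

definition yk :: "nat \<Rightarrow> nat \<Rightarrow> nat" where
  "yk k u = (if u < k then Suc u mod k else if u < 2*k then k + (Suc u - k) mod k else u)"
definition xk :: "nat \<Rightarrow> nat \<Rightarrow> nat" where
  "xk k u = (if u = 0 then k else if u = k then 0 else if u = 1 then Suc k else if u = Suc k then 1 else u)"
definition p1 :: "nat \<Rightarrow> nat \<Rightarrow> nat" where
  "p1 k j = (if j = 0 then 0 else if j = 1 then Suc k else j)"
definition p2 :: "nat \<Rightarrow> nat \<Rightarrow> nat" where
  "p2 k j = (if j = 0 then k else if j = 1 then 1 else k + j)"

context fixes k :: nat assumes k2: "k \<ge> 2" begin

lemma ycyc1: "\<forall>j<k. yk k (id j) = id (Suc j mod k)"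
  by (simp add: yk_def)
lemma ycyc2: "\<forall>j<k. yk k ((\<lambda>j. k + j) j) = (\<lambda>j. k + j) (Suc j mod k)"
  by (simp add: yk_def)

lemma tcyc1: "\<forall>j<k. (yk k \<circ> xk k) (p1 k j) = p1 k (Suc j mod k)"
proof (intro allI impI)
  fix j assume j: "j < k"
  consider "j = 0" | "j = 1" | "j \<ge> 2" by linarith
  then show "(yk k \<circ> xk k) (p1 k j) = p1 k (Suc j mod k)"
  proof cases
    case 1 then show ?thesis using k2 by (simp add: yk_def xk_def p1_def)
  next
    case 2 then show ?thesis using k2
      by (cases "k = 2") (auto simp add: yk_def xk_def p1_def)
  next
    case 3 then show ?thesis using k2 j
      by (cases "Suc j = k") (auto simp add: yk_def xk_def p1_def)
  qed
qed

lemma tcyc2: "\<forall>j<k. (yk k \<circ> xk k) (p2 k j) = p2 k (Suc j mod k)"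
proof (intro allI impI)
  fix j assume j: "j < k"
  consider "j = 0" | "j = 1" | "j \<ge> 2" by linarith
  then show "(yk k \<circ> xk k) (p2 k j) = p2 k (Suc j mod k)"
  proof cases
    case 1 then show ?thesis using k2 by (simp add: yk_def xk_def p2_def)
  next
    case 2 then show ?thesis using k2
      by (cases "k = 2") (auto simp add: yk_def xk_def p2_def)
  next
    case 3 then show ?thesis using k2 j
      by (cases "Suc j = k") (auto simp add: yk_def xk_def p2_def)
  qed
qed


lemma k0: "0 < k" using k2 by simp

abbreviation "C1 \<equiv> {..<k}"
abbreviation "C2 \<equiv> {k..<2*k}"

lemma img_plus: "(\<lambda>j. k + j) ` {..<k} = C2"
proof -
  have "u \<in> (\<lambda>j. k + j) ` {..<k}" if "k \<le> u" "u < 2*k" for u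
    using that by (auto simp: image_iff intro!: bexI[of _ "u - k"])
  then show ?thesis by auto
qed

lemma yorb1: "u < k \<Longrightarrow> orb (yk k) u = C1"
  using cyc_orb[OF _ ycyc1, of u] k2 by simp

lemma yorb2: "k \<le> u \<Longrightarrow> u < 2*k \<Longrightarrow> orb (yk k) u = C2"
  using cyc_orb[OF _ ycyc2, of "u - k"] k2 img_plus by simp

lemma ymaps: "\<forall>u\<in>{..<2*k}. yk k u \<in> {..<2*k}"
proof
  fix u :: nat assume "u \<in> {..<2*k}"
  have a: "Suc u mod k < k" "(Suc u - k) mod k < k" using k2 by simp_all
  then have "Suc u mod k < 2*k" "k + (Suc u - k) mod k < 2*k" using k2 by linarith+
  then show "yk k u \<in> {..<2*k}" using \<open>u \<in> {..<2*k}\<close> unfolding yk_def by auto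
qed

lemma xmaps: "\<forall>u\<in>{..<2*k}. xk k u \<in> {..<2*k}"
  using k2 by (auto simp: xk_def)

lemma xx: "xk k (xk k u) = u"
  using k2 by (auto simp: xk_def)

lemma cover: "u < 2*k \<Longrightarrow> (\<exists>j<k. u = p1 k j) \<or> (\<exists>j<k. u = p2 k j)"
proof -
  assume u: "u < 2*k"
  consider "u = 0" | "u = 1" | "u = k" | "u = Suc k" | "2 \<le> u \<and> u < k" | "k + 2 \<le> u \<and> u < 2*k"
    using u k2 by linarith
  then show ?thesis
  proof cases
    case 1 then show ?thesis using k2 by (auto simp: p1_def intro!: exI[of _ 0])
  next
    case 2 then show ?thesis using k2 by (auto simp: p2_def intro!: exI[of _ 1])
  next
    case 3 then show ?thesis using k2 by (auto simp: p2_def intro!: exI[of _ 0])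
  next
    case 4 then show ?thesis using k2 by (auto simp: p1_def intro!: exI[of _ 1])
  next
    case 5 then show ?thesis using k2 by (auto simp: p1_def intro!: exI[of _ u])
  next
    case 6 then show ?thesis using k2 by (auto simp: p2_def intro!: exI[of _ "u - k"])
  qed
qed

lemma ypow: "u < 2*k \<Longrightarrow> (yk k ^^ k) u = u"
proof -
  assume u: "u < 2*k"
  show ?thesis
  proof (cases "u < k")
    case True then show ?thesis using cyc_id[OF _ ycyc1, of u] k2 by simp
  next
    case False then show ?thesis using cyc_id[OF _ ycyc2, of "u - k"] k2 u by simp
  qed
qed

lemma tpow: "u < 2*k \<Longrightarrow> ((yk k \<circ> xk k) ^^ k) u = u"
  using cover cyc_id[OF _ tcyc1] cyc_id[OF _ tcyc2] k2 by fastforce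

definition "O1 = p1 k ` {..<k}"
definition "O2 = p2 k ` {..<k}"

lemma torb: "u < 2*k \<Longrightarrow> orb (yk k \<circ> xk k) u = O1 \<or> orb (yk k \<circ> xk k) u = O2"
  using cover cyc_orb[OF _ tcyc1] cyc_orb[OF _ tcyc2] k2 unfolding O1_def O2_def by fastforce

lemma O1_mem: "v \<in> O1 \<longleftrightarrow> v = 0 \<or> v = Suc k \<or> (2 \<le> v \<and> v < k)"
proof
  assume "v \<in> O1" then show "v = 0 \<or> v = Suc k \<or> (2 \<le> v \<and> v < k)"
    unfolding O1_def p1_def by auto
next
  assume "v = 0 \<or> v = Suc k \<or> (2 \<le> v \<and> v < k)"
  then show "v \<in> O1" unfolding O1_def p1_def image_iff using k2
    by (elim disjE) (auto intro: bexI[of _ 0] bexI[of _ 1] bexI[of _ v])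
qed

lemma O2_mem: "v \<in> O2 \<longleftrightarrow> v = k \<or> v = 1 \<or> (k + 2 \<le> v \<and> v < 2*k)"
proof
  assume "v \<in> O2" then show "v = k \<or> v = 1 \<or> (k + 2 \<le> v \<and> v < 2*k)"
    unfolding O2_def p2_def by auto
next
  assume "v = k \<or> v = 1 \<or> (k + 2 \<le> v \<and> v < 2*k)"
  then show "v \<in> O2" unfolding O2_def p2_def image_iff using k2
    by (elim disjE) (auto intro: bexI[of _ 0] bexI[of _ 1] bexI[of _ "v - k"])
qed

lemma O1_orb: "orb (yk k \<circ> xk k) 0 = O1"
proof -
  have "orb (yk k \<circ> xk k) (p1 k 0) = p1 k ` {..<k}" using cyc_orb[OF k0 tcyc1 k0] by blast
  moreover have "p1 k 0 = 0" by (simp add: p1_def)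
  ultimately show ?thesis unfolding O1_def by metis
qed
lemma O2_orb: "orb (yk k \<circ> xk k) k = O2"
proof -
  have "orb (yk k \<circ> xk k) (p2 k 0) = p2 k ` {..<k}" using cyc_orb[OF k0 tcyc2 k0] by blast
  moreover have "p2 k 0 = k" by (simp add: p2_def)
  ultimately show ?thesis unfolding O2_def by metis
qed

lemma orbits: "xy_orbits {..<2*k} (xk k) (yk k) = {O1, O2}"
proof
  show "xy_orbits {..<2*k} (xk k) (yk k) \<subseteq> {O1, O2}"
    unfolding xy_orbits_def using torb by auto
  show "{O1, O2} \<subseteq> xy_orbits {..<2*k} (xk k) (yk k)"
  proof -
    have "(0::nat) \<in> {..<2*k}" "k \<in> {..<2*k}" using k2 by auto
    then show ?thesis unfolding xy_orbits_def using O1_orb O2_orb by blast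
  qed
qed

lemma O12: "O1 \<noteq> O2"
  using O1_mem[of 0] O2_mem[of 0] k2 by auto

lemma cardO1: "card O1 = k"
proof -
  have "inj_on (p1 k) {..<k}" unfolding inj_on_def p1_def by auto
  then show ?thesis unfolding O1_def by (simp add: card_image)
qed
lemma cardO2: "card O2 = k"
proof -
  have "inj_on (p2 k) {..<k}" unfolding inj_on_def p2_def using k2 by auto
  then show ?thesis unfolding O2_def by (simp add: card_image)
qed


abbreviation "RR \<equiv> ({(w, xk k w) | w. w \<in> {..<2*k}} \<union> {(w, yk k w) | w. w \<in> {..<2*k}})"

lemma ypath: "u \<in> {..<2*k} \<Longrightarrow> (u, (yk k ^^ n) u) \<in> RR\<^sup>*"
proof (induction n)
  case 0 then show ?case by simp
next
  case (Suc n)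
  have "(yk k ^^ n) u \<in> {..<2*k}" using pow_in[OF ymaps Suc.prems] .
  then have "((yk k ^^ n) u, (yk k ^^ Suc n) u) \<in> RR" by auto
  then show ?case using Suc by (meson rtrancl_into_rtrancl)
qed

lemma reach: "u < 2*k \<Longrightarrow> (0, u) \<in> RR\<^sup>* \<and> (u, 0) \<in> RR\<^sup>*"
proof -
  assume u: "u < 2*k"
  have x0: "(0, k) \<in> RR" using k2 by (auto simp: xk_def)
  have xk0: "(k, 0) \<in> RR" using k2 by (auto simp: xk_def)
  show ?thesis
  proof (cases "u < k")
    case True
    have "(yk k ^^ u) (id 0) = id ((0 + u) mod k)" using cyc_iter[OF k0 ycyc1 k0] by blast
    then have a: "(yk k ^^ u) 0 = u" using True by simp
    have "(yk k ^^ (k - u)) (id u) = id ((u + (k - u)) mod k)" using cyc_iter[OF k0 ycyc1 True] by blast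
    then have b: "(yk k ^^ (k - u)) u = 0" using True by simp
    show ?thesis using ypath[of 0 u] ypath[of u "k - u"] a b u k2 by simp
  next
    case False
    have j: "u - k < k" using u False by simp
    have "(yk k ^^ (u - k)) ((\<lambda>j. k + j) 0) = (\<lambda>j. k + j) ((0 + (u - k)) mod k)"
      using cyc_iter[OF k0 ycyc2 k0] by blast
    then have a: "(yk k ^^ (u - k)) k = u" using False j by simp
    have "(yk k ^^ (2*k - u)) ((\<lambda>j. k + j) (u - k)) = (\<lambda>j. k + j) (((u - k) + (2*k - u)) mod k)"
      using cyc_iter[OF k0 ycyc2 j] by blast
    moreover have "(u - k) + (2*k - u) = k" using u False by simp
    ultimately have b: "(yk k ^^ (2*k - u)) u = k" using False by simp
    have "(k, u) \<in> RR\<^sup>*" using ypath[of k "u - k"] a k2 by simp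
    moreover have "(u, k) \<in> RR\<^sup>*" using ypath[of u "2*k - u"] b u by simp
    ultimately show ?thesis using x0 xk0
      by (meson converse_rtrancl_into_rtrancl rtrancl_into_rtrancl)
  qed
qed

lemma trans_act: "transitive_action {..<2*k} (xk k) (yk k)"
  unfolding transitive_action_def
proof (intro conjI ballI)
  have "(0::nat) \<in> {..<2*k}" using k2 by simp
  then show "{..<2*k} \<noteq> {}" by blast
  fix u v assume "u \<in> {..<2*k}" "v \<in> {..<2*k}"
  then show "(u, v) \<in> RR\<^sup>*" using reach by (meson lessThan_iff rtrancl_trans)
qed

lemma tri: "triangle_action k k {..<2*k} (xk k) (yk k)"
  unfolding triangle_action_def
proof (intro conjI)
  show "finite {..<2*k}" by simp
  show "bij_betw (xk k) {..<2*k} {..<2*k}"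
    by (rule bij_from_pow[OF xmaps, of 2]) (simp_all add: numeral_2_eq_2 xx)
  show "bij_betw (yk k) {..<2*k} {..<2*k}"
    by (rule bij_from_pow[OF ymaps, of k]) (simp_all add: ypow k0)
  show "\<forall>u\<in>{..<2*k}. xk k (xk k u) = u" by (simp add: xx)
  show "\<forall>u\<in>{..<2*k}. (yk k ^^ k) u = u" by (simp add: ypow)
  show "\<forall>u\<in>{..<2*k}. ((yk k \<circ> xk k) ^^ k) u = u" using tpow by simp
qed

lemma jan: "januarial k {..<2*k} (xk k) (yk k)"
  unfolding januarial_def
  using tri trans_act orbits O12 cardO1 cardO2 k0 by auto

lemma fv1: "face_vertices (yk k) O1 = {C1, C2}"
proof
  show "face_vertices (yk k) O1 \<subseteq> {C1, C2}"
  proof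
    fix c assume "c \<in> face_vertices (yk k) O1"
    then obtain v where v: "v \<in> O1" "c = orb (yk k) v" unfolding face_vertices_def by auto
    then have "v < 2*k" using O1_mem[of v] k2 by auto
    then show "c \<in> {C1, C2}" using v yorb1 yorb2 by (cases "v < k") auto
  qed
  have "orb (yk k) 0 = C1" "orb (yk k) (Suc k) = C2" using yorb1 yorb2 k2 by auto
  moreover have "0 \<in> O1" "Suc k \<in> O1" using O1_mem by auto
  ultimately show "{C1, C2} \<subseteq> face_vertices (yk k) O1" unfolding face_vertices_def by blast
qed

lemma fv2: "face_vertices (yk k) O2 = {C1, C2}"
proof
  show "face_vertices (yk k) O2 \<subseteq> {C1, C2}"
  proof
    fix c assume "c \<in> face_vertices (yk k) O2"
    then obtain v where v: "v \<in> O2" "c = orb (yk k) v" unfolding face_vertices_def by auto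
    then have "v < 2*k" using O2_mem[of v] k2 by auto
    then show "c \<in> {C1, C2}" using v yorb1 yorb2 by (cases "v < k") auto
  qed
  have "orb (yk k) 1 = C1" "orb (yk k) k = C2" using yorb1 yorb2 k2 by auto
  moreover have "1 \<in> O2" "k \<in> O2" using O2_mem by auto
  ultimately show "{C1, C2} \<subseteq> face_vertices (yk k) O2" unfolding face_vertices_def by blast
qed

lemma ce: "common_edges (xk k) O1 O2 = {{0, k}, {1, Suc k}}"
proof
  show "common_edges (xk k) O1 O2 \<subseteq> {{0, k}, {1, Suc k}}"
  proof
    fix e assume "e \<in> common_edges (xk k) O1 O2"
    then obtain v w where vw: "v \<in> O1" "w \<in> O2" "e = {v, xk k v}" "e = {w, xk k w}"
      unfolding common_edges_def face_edges_def by auto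
    have "v = 0 \<or> v = Suc k \<or> (2 \<le> v \<and> v < k)" using vw O1_mem by auto
    moreover have "w = k \<or> w = 1 \<or> (k + 2 \<le> w \<and> w < 2*k)" using vw O2_mem by auto
    moreover have "w \<in> {v, xk k v}" using vw by auto
    ultimately show "e \<in> {{0, k}, {1, Suc k}}" using vw k2
      by (auto simp: xk_def insert_commute)
  qed
  have "{0, k} = {0, xk k 0}" "{0, k} = {k, xk k k}" "{1, Suc k} = {Suc k, xk k (Suc k)}"
    "{1, Suc k} = {1, xk k 1}" using k2 by (auto simp: xk_def)
  moreover have "0 \<in> O1" "Suc k \<in> O1" "1 \<in> O2" "k \<in> O2" using O1_mem O2_mem by auto
  ultimately show "{{0, k}, {1, Suc k}} \<subseteq> common_edges (xk k) O1 O2"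
    unfolding common_edges_def face_edges_def by blast
qed

lemma circ: "simple_circuit (common_vertices (yk k) O1 O2) (common_edges (xk k) O1 O2) (edge_ends (yk k))"
proof -
  define vs where "vs = (\<lambda>i::nat. if i = 0 then C1 else C2)"
  define es where "es = (\<lambda>i::nat. if i = 0 then {0, k} else {1, Suc k})"
  have ee1: "edge_ends (yk k) {0, k} = {C1, C2}"
    unfolding edge_ends_def using yorb1[of 0] yorb2[of k] k2 by auto
  have ee2: "edge_ends (yk k) {1, Suc k} = {C1, C2}"
    unfolding edge_ends_def using yorb1[of 1] yorb2[of "Suc k"] k2 by auto
  have "0 \<in> C1" "0 \<notin> C2" using k0 by auto
  then have C12: "C1 \<noteq> C2" by blast
  have e12: "{0, k} \<noteq> {1, Suc k}" by auto
  have lt2: "{..<2::nat} = {0, 1}" by auto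
  have i1: "inj_on vs {..<2}" unfolding lt2 vs_def using C12 by auto
  have i2: "inj_on es {..<2}" unfolding lt2 es_def using e12 by auto
  have i3: "{C1, C2} = vs ` {..<2}" unfolding lt2 vs_def by auto
  have i4: "{{0, k}, {1, Suc k}} = es ` {..<2}" unfolding lt2 es_def by auto
  have i5: "\<forall>i<2. edge_ends (yk k) (es i) = {vs i, vs (Suc i mod 2)}"
  proof (intro allI impI)
    fix i :: nat assume "i < 2"
    then have "i = 0 \<or> i = 1" by auto
    then show "edge_ends (yk k) (es i) = {vs i, vs (Suc i mod 2)}"
      using ee1 ee2 by (auto simp: vs_def es_def insert_commute)
  qed
  have i0: "(1::nat) \<le> 2" by simp
  show ?thesis unfolding simple_circuit_def common_vertices_def fv1 fv2 ce Int_absorb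
    using i0 i1 i2 i3 i4 i5 by blast
qed

end

theorem theorem2:
  fixes k :: nat
  assumes "k \<ge> 2"
  shows "\<exists>S x y. januarial_simple_h1 k S x y"
proof -
  have "januarial_simple_h1 k {..<2*k} (xk k) (yk k)"
    unfolding januarial_simple_h1_def
    using jan[OF assms] orbits[OF assms] O12[OF assms] circ[OF assms] by blast
  then show ?thesis by blast
qed

end
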